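(* Let $g:[0,\infty)\to\mathbb{R}$ satisfy $g(1)=0$ and $g(1/2)=1/2$, and suppose that the function $\hat H(a_1,\ldots,a_n)=g(a_1)+\cdots+g(a_n)-g(a_1+\cdots+a_n)$, defined on finite sequences of nonnegative reals with positive sum, is homogeneous (i.e. $\hat H(ca)=c\hat H(a)$ for all $c>0$) and continuous (for each $n$, as a function of $(a_1,\ldots,a_n)$). Then $g(a)=a\log_2(1/a)$ for every rational $a>0$.
   Context: All logarithms are to base $2$. *)

theory Defs
  imports "HOL-Analysis.Analysis"
begin

text \<open>A finite sequence (a_1,...,a_n) is represented by its length n and a function
  a :: nat => real, of which only the values a 0, ..., a (n-1) matter.\<close>

definition Hhat :: "(real \<Rightarrow> real) \<Rightarrow> nat \<Rightarrow> (nat \<Rightarrow> real) \<Rightarrow> real" where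
  "Hhat g n a = (\<Sum>i<n. g (a i)) - g (\<Sum>i<n. a i)"

definition Hdom :: "nat \<Rightarrow> (nat \<Rightarrow> real) set" where
  "Hdom n = {a. (\<forall>i<n. 0 \<le> a i) \<and> 0 < (\<Sum>i<n. a i)}"

text \<open>The same domain embedded in nat => real (product topology) by padding with
  zeros beyond index n; topologically this is the subset of R^n.\<close>
definition Hdom0 :: "nat \<Rightarrow> (nat \<Rightarrow> real) set" where
  "Hdom0 n = {a \<in> Hdom n. \<forall>i\<ge>n. a i = 0}"

end

theory Submission
  imports Defs
begin

lemma tlog_bound:
  fixes t :: real assumes "0 < t" "t \<le> 1"
  shows "\<bar>t * log 2 t\<bar> \<le> 2"
proof -
  have l2: "ln 2 \<ge> (1/2::real)"
    using ln_le_minus_one[of "1/2"] by (simp add: ln_div)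
  have a: "ln t \<le> 0" using assms by simp
  have b: "ln (1/t) \<le> 1/t - 1" using ln_le_minus_one[of "1/t"] assms by simp
  hence "- ln t \<le> 1/t - 1" using assms by (simp add: ln_div)
  hence "- (t * ln t) \<le> 1 - t" using assms by (simp add: field_simps)
  hence c: "\<bar>t * ln t\<bar> \<le> 1" using a assms by (smt (verit) mult_nonneg_nonpos)
  have "t * log 2 t = t * ln t / ln 2" by (simp add: log_def)
  hence "\<bar>t * log 2 t\<bar> = \<bar>t * ln t\<bar> / ln 2" using l2 by simp
  also have "\<dots> \<le> 1 / (1/2)" using c l2 by (intro frac_le) auto
  finally show ?thesis by simp
qed


theorem mainTheorem4:
  fixes g :: "real \<Rightarrow> real"
  assumes g1: "g 1 = 0"
    and ghalf: "g (1/2) = 1/2"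
    and homog: "\<And>n a c. a \<in> Hdom n \<Longrightarrow> 0 < c \<Longrightarrow>
                  Hhat g n (\<lambda>i. c * a i) = c * Hhat g n a"
    and cont: "\<And>n. continuous_on (Hdom0 n) (Hhat g n)"
  shows "\<And>a. a \<in> \<rat> \<Longrightarrow> 0 < a \<Longrightarrow> g a = a * log 2 (1 / a)"
proof -
  define L where "L x = x * log 2 x" for x :: real
  define F where "F x = g x + L x" for x
  have H2: "Hhat g 2 a = g (a 0) + g (a 1) - g (a 0 + a 1)" for a
    by (simp add: Hhat_def numeral_2_eq_2)
  have hom2: "g (c*x) + g (c*y) - g (c*x + c*y) = c * (g x + g y - g (x+y))"
    if "0 \<le> x" "0 \<le> y" "0 < x + y" "0 < c" for x y c
  proof -
    let ?a = "\<lambda>i::nat. if i = 0 then x else y"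
    have "?a \<in> Hdom 2" using that by (simp add: Hdom_def numeral_2_eq_2)
    from homog[OF this that(4)] show ?thesis by (simp add: H2)
  qed
  have Lc: "L (c*x) = c * L x + x * (c * log 2 c)" if "0<c" "0<x" for c x
    using that by (simp add: L_def log_mult algebra_simps)
  have homF: "F (c*x) + F (c*y) - F (c*x + c*y) = c * (F x + F y - F (x+y))"
    if "0 < x" "0 < y" "0 < c" for x y c
  proof -
    have e: "c*x + c*y = c*(x+y)" by (simp add: algebra_simps)
    have "L (c*x) + L (c*y) - L (c*x+c*y) = c*(L x + L y - L (x+y))"
      unfolding e using Lc[of c x] Lc[of c y] Lc[of c "x+y"] that by (simp add: algebra_simps)
    moreover have "g (c*x) + g (c*y) - g (c*x + c*y) = c * (g x + g y - g (x+y))"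
      using hom2 that by simp
    ultimately show ?thesis unfolding F_def by (simp add: algebra_simps)
  qed
  have F1: "F 1 = 0" using g1 by (simp add: F_def L_def)
  have Fh: "F (1/2) = 0" using ghalf by (simp add: F_def L_def log_divide)
  have mulF: "F (c * real n) = c * F (real n) + real n * F c" if "0 < c" "1 \<le> n" for c n
    using that(2)
  proof (induction n rule: dec_induct)
    case base
    then show ?case using F1 by simp
  next
    case (step n)
    have "F (c * real n) + F (c*1) - F (c * real n + c*1) = c * (F (real n) + F 1 - F (real n + 1))"
      using homF[of "real n" 1 c] step that by simp
    then show ?case using step F1 by (simp add: algebra_simps)
  qed
  have F2: "F 2 = 0" using mulF[of "1/2" 2] F1 Fh by simp
  have F2pow: "F (2^b) = 0" for b :: nat
  proof (induction b)
    case 0 then show ?case using F1 by simp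
  next
    case (Suc b)
    have "F (2 * real (2^b)) = 2 * F (real (2^b)) + real (2^b) * F 2"
      by (rule mulF) auto
    then show ?case using Suc F2 by simp
  qed
  define e where "e t = (\<lambda>i::nat. if i = 0 then 1 else if i = 1 then t else (0::real))" for t :: real
  have ce: "continuous_on {0..1} e"
  proof (rule continuous_on_coordinatewise_then_product)
    fix i :: nat
    show "continuous_on {0..1} (\<lambda>t. e t i)"
      by (cases "i = 0"; cases "i = 1") (simp_all add: e_def continuous_on_id)
  qed
  have sub: "e ` {0..1} \<subseteq> Hdom0 2"
    by (auto simp: e_def Hdom0_def Hdom_def numeral_2_eq_2)
  have "continuous_on {0..1} (Hhat g 2 \<circ> e)"
    by (rule continuous_on_compose[OF ce continuous_on_subset[OF cont sub]])
  hence "compact ((Hhat g 2 \<circ> e) ` {0..1})" by (rule compact_continuous_image) simp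
  hence "bounded ((Hhat g 2 \<circ> e) ` {0..1})" by (rule compact_imp_bounded)
  then obtain B where B: "\<And>x. x \<in> (Hhat g 2 \<circ> e) ` {0..1} \<Longrightarrow> norm x \<le> B"
    by (auto simp: bounded_iff)
  have Bt: "\<bar>g 1 + g t - g (1+t)\<bar> \<le> B" if "0 \<le> t" "t \<le> 1" for t
  proof -
    have "Hhat g 2 (e t) = g 1 + g t - g (1+t)" by (simp add: H2 e_def)
    moreover have "Hhat g 2 (e t) \<in> (Hhat g 2 \<circ> e) ` {0..1}" using that by auto
    ultimately show ?thesis using B[of "Hhat g 2 (e t)"] by simp
  qed
  define C where "C = B + 4"
  have C0: "0 \<le> C" using Bt[of 1] unfolding C_def by simp
  have DC: "\<bar>F 1 + F t - F (1+t)\<bar> \<le> C" if "0 < t" "t \<le> 1" for t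
  proof -
    have a: "\<bar>L t\<bar> \<le> 2" using tlog_bound[OF that] by (simp add: L_def)
    have l1: "log 2 (1+t) \<le> 1" using that by simp
    have l0: "0 \<le> log 2 (1+t)" using that by simp
    have "L (1+t) \<le> (1+t) * 1" unfolding L_def using l1 that by (intro mult_left_mono) auto
    moreover have "0 \<le> L (1+t)" unfolding L_def using l0 that by simp
    ultimately have b: "\<bar>L (1+t)\<bar> \<le> 2" using that by simp
    have "F 1 + F t - F (1+t) = (g 1 + g t - g (1+t)) + L t - L (1+t)"
      by (simp add: F_def L_def)
    thus ?thesis using a b Bt[of t] that unfolding C_def by linarith
  qed
  have indb: "\<forall>n. 1 \<le> n \<and> n < (2::nat)^b \<longrightarrow> \<bar>F (real n)\<bar> \<le> 2 * C * real n" for b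
  proof (induction b)
    case 0 then show ?case by simp
  next
    case (Suc b)
    show ?case
    proof (intro allI impI)
      fix n :: nat assume n: "1 \<le> n \<and> n < 2 ^ Suc b"
      show "\<bar>F (real n)\<bar> \<le> 2 * C * real n"
      proof (cases "n < 2^b")
        case True then show ?thesis using Suc n by auto
      next
        case False
        show ?thesis
        proof (cases "n = 2^b")
          case True
          then show ?thesis using F2pow[of b] C0 by simp
        next
          case nb: False
          define r where "r = n - 2^b"
          have r1: "1 \<le> r" "r < 2^b" using False nb n unfolding r_def by auto
          have nr: "real n = 2^b + real r" using False unfolding r_def by simp
          define y where "y = real r / 2^b"
          have y: "0 < y" "y \<le> 1" using r1 unfolding y_def by (auto simp: field_simps)
          have cy: "2^b * y = real r" unfolding y_def by simp
          have "F (2^b*1) + F (2^b*y) - F (2^b*1 + 2^b*y) = 2^b * (F 1 + F y - F (1+y))"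
            by (rule homF) (use y in auto)
          hence eq: "F (real n) = F (real r) - 2^b * (F 1 + F y - F (1+y))"
            using F2pow[of b] cy nr by simp
          have "\<bar>2^b * (F 1 + F y - F (1+y))\<bar> \<le> 2^b * C"
            using DC[OF y] by (simp add: abs_mult)
          moreover have "\<bar>F (real r)\<bar> \<le> 2 * C * real r" using Suc r1 by auto
          ultimately have "\<bar>F (real n)\<bar> \<le> 2 * C * real r + 2^b * C" using eq by linarith
          also have "\<dots> \<le> 2 * C * real n" using nr C0 by (simp add: algebra_simps)
          finally show ?thesis .
        qed
      qed
    qed
  qed
  have Fb: "\<bar>F (real n)\<bar> \<le> 2 * C * real n" if "1 \<le> n" for n
    using indb[of n] that by auto
  have Fpow: "real n * F (real n ^ k) = real k * real n ^ k * F (real n)" if "1 \<le> n" for n k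
  proof (induction k)
    case 0 then show ?case using F1 by simp
  next
    case (Suc k)
    have "F (real n ^ k * real n) = real n ^ k * F (real n) + real n * F (real n ^ k)"
      by (rule mulF) (use that in auto)
    hence "real n * F (real n ^ Suc k) = real n * (real n ^ k * F (real n)) + real n * (real n * F (real n ^ k))"
      by (simp add: algebra_simps)
    also have "\<dots> = real (Suc k) * real n ^ Suc k * F (real n)"
      using Suc by (simp add: algebra_simps)
    finally show ?case .
  qed
  have Fz: "F (real n) = 0" if "1 \<le> n" for n
  proof (rule ccontr)
    assume nz: "F (real n) \<noteq> 0"
    obtain k :: nat where k: "2 * C * real n / \<bar>F (real n)\<bar> < real k"
      using reals_Archimedean2 by blast
    have np: "0 < real n" using that by simp
    have "\<bar>F (real (n^k))\<bar> \<le> 2 * C * real (n^k)" by (rule Fb) (use that in simp)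
    hence "real n * \<bar>F (real n ^ k)\<bar> \<le> real n * (2 * C * real n ^ k)"
      using np by (intro mult_left_mono) auto
    hence "\<bar>real n * F (real n ^ k)\<bar> \<le> real n * (2 * C * real n ^ k)"
      using np by (simp add: abs_mult)
    hence "real k * real n ^ k * \<bar>F (real n)\<bar> \<le> real n ^ k * (2 * C * real n)"
      unfolding Fpow[OF that] using np by (simp add: abs_mult algebra_simps)
    hence "real k * \<bar>F (real n)\<bar> \<le> 2 * C * real n"
      using np by (simp add: mult.assoc)
    moreover have "2 * C * real n < real k * \<bar>F (real n)\<bar>"
      using k nz by (simp add: field_simps)
    ultimately show False by simp
  qed
  fix a :: real assume aQ: "a \<in> \<rat>" and apos: "0 < a"
  obtain m k :: nat where k: "k \<noteq> 0" and mk: "\<bar>a\<bar> = real m / real k"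
    using Rats_abs_nat_div_natE[OF aQ] by metis
  have am: "a * real k = real m" using mk k apos by (simp add: field_simps)
  have "0 < a * real k" using apos k by simp
  hence "0 < real m" using am by simp
  hence m1: "1 \<le> m" by simp
  have "F (a * real k) = a * F (real k) + real k * F a" by (rule mulF) (use apos k in auto)
  hence "real k * F a = 0" using am Fz[OF m1] Fz[of k] k by simp
  hence "F a = 0" using k by simp
  thus "g a = a * log 2 (1 / a)" using apos by (simp add: F_def L_def log_divide)
qed

end
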